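(* Let $\mathcal I$ be a Stable Marriage instance containing $r$ men $m^d_1,\dots,m^d_r$ and $r$ women $w^d_1,\dots,w^d_r$ such that for every $i\in[r]$ (indices taken modulo $r$) the preference list of $m^d_i$ begins with $w^d_i\succ w^d_{i+1}\succ\dots\succ w^d_{r+i-1}$ and the preference list of $w^d_i$ begins with $m^d_i\succ m^d_{i+1}\succ\dots\succ m^d_{r+i-1}$ (the remaining agents follow in arbitrary order). Then for every list $S$ of at most $r-1$ swap operations, every stable matching of the instance $\mathcal I[S]$ contains the pairs $\{m^d_i,w^d_i\}$ for all $i\in[r]$.
   Context: A Stable Marriage (SM) instance consists of a set $U$ of men and a set $W$ of women with $|U|=|W|=n$, and for every agent a strict total order (preference list) over all agents of the opposite gender. A matching is a set of man–woman pairs in which each agent appears at most once. A man–woman pair $\{m,w\}$ blocks a matching $M$ if ($m$ is unassigned or prefers $w$ to his partner in $M$) and ($w$ is unassigned or prefers $m$ to her partner in $M$); $M$ is stable if no pair blocks it. A swap operation exchanges two adjacent agents in the preference list of one agent (of the whole instance, possibly a non-dummy agent or a dummy agent). $\mathcal I[S]$ denotes the instance obtained by applying the swaps in the list $S$ to $\mathcal I$. *)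

theory Defs
  imports Main
begin

type_synonym 'a prefs = "'a \<Rightarrow> 'a list"

definition sm_instance :: "'a set \<Rightarrow> 'a set \<Rightarrow> 'a prefs \<Rightarrow> bool" where
  "sm_instance U W P \<longleftrightarrow> finite U \<and> finite W \<and> U \<inter> W = {} \<and> card U = card W \<and>
     (\<forall>m\<in>U. distinct (P m) \<and> set (P m) = W) \<and>
     (\<forall>w\<in>W. distinct (P w) \<and> set (P w) = U)"

definition prefers :: "'a prefs \<Rightarrow> 'a \<Rightarrow> 'a \<Rightarrow> 'a \<Rightarrow> bool" where
  "prefers P a x y \<longleftrightarrow> (\<exists>i j. i < j \<and> j < length (P a) \<and> P a ! i = x \<and> P a ! j = y)"

definition matching :: "'a set \<Rightarrow> 'a set \<Rightarrow> ('a \<times> 'a) set \<Rightarrow> bool" where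
  "matching U W M \<longleftrightarrow> M \<subseteq> U \<times> W \<and>
     (\<forall>m w w'. (m, w) \<in> M \<longrightarrow> (m, w') \<in> M \<longrightarrow> w = w') \<and>
     (\<forall>m m' w. (m, w) \<in> M \<longrightarrow> (m', w) \<in> M \<longrightarrow> m = m')"

definition blocks :: "'a prefs \<Rightarrow> ('a \<times> 'a) set \<Rightarrow> 'a \<Rightarrow> 'a \<Rightarrow> bool" where
  "blocks P M m w \<longleftrightarrow>
     ((\<forall>w'. (m, w') \<notin> M) \<or> (\<exists>w'. (m, w') \<in> M \<and> prefers P m w w')) \<and>
     ((\<forall>m'. (m', w) \<notin> M) \<or> (\<exists>m'. (m', w) \<in> M \<and> prefers P w m m'))"

definition stable :: "'a set \<Rightarrow> 'a set \<Rightarrow> 'a prefs \<Rightarrow> ('a \<times> 'a) set \<Rightarrow> bool" where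
  "stable U W P M \<longleftrightarrow> matching U W M \<and> \<not> (\<exists>m\<in>U. \<exists>w\<in>W. blocks P M m w)"

definition swap_adj :: "'a list \<Rightarrow> nat \<Rightarrow> 'a list" where
  "swap_adj xs k = xs[k := xs ! Suc k, Suc k := xs ! k]"

definition apply_swap :: "'a prefs \<Rightarrow> 'a \<times> nat \<Rightarrow> 'a prefs" where
  "apply_swap P s = (case s of (a, k) \<Rightarrow> P(a := swap_adj (P a) k))"

definition apply_swaps :: "'a prefs \<Rightarrow> ('a \<times> nat) list \<Rightarrow> 'a prefs" where
  "apply_swaps P S = foldl apply_swap P S"

text \<open>Validity of a swap list: agent of the instance, adjacent positions within the list
  (list lengths are invariant under swaps).\<close>
definition valid_swaps :: "'a set \<Rightarrow> 'a set \<Rightarrow> 'a prefs \<Rightarrow> ('a \<times> nat) list \<Rightarrow> bool" where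
  "valid_swaps U W P S \<longleftrightarrow> (\<forall>(a, k) \<in> set S. a \<in> U \<union> W \<and> Suc k < length (P a))"

end

theory Submission
  imports Defs
begin

definition bef :: "'a list \<Rightarrow> 'a \<Rightarrow> 'a \<Rightarrow> bool" where
  "bef L x y \<longleftrightarrow> (\<exists>i j. i < j \<and> j < length L \<and> L ! i = x \<and> L ! j = y)"

lemma prefers_bef: "prefers P a x y = bef (P a) x y"
  by (simp add: prefers_def bef_def)

lemma bef_set: "bef L x y \<Longrightarrow> x \<in> set L \<and> y \<in> set L"
  unfolding bef_def by auto

lemma bef_total: "x \<in> set L \<Longrightarrow> y \<in> set L \<Longrightarrow> x \<noteq> y \<Longrightarrow> bef L x y \<or> bef L y x"
  unfolding bef_def in_set_conv_nth
  by (metis linorder_neqE_nat)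

lemma bef_irrefl: "distinct L \<Longrightarrow> \<not> bef L x x"
  unfolding bef_def using nth_eq_iff_index_eq by fastforce

lemma bef_trans: "distinct L \<Longrightarrow> bef L x y \<Longrightarrow> bef L y z \<Longrightarrow> bef L x z"
  unfolding bef_def
  by (metis dual_order.strict_trans nth_eq_iff_index_eq)

lemma bef_asym: "distinct L \<Longrightarrow> bef L x y \<Longrightarrow> \<not> bef L y x"
  using bef_trans bef_irrefl by metis

lemma bef_swap:
  assumes "Suc k < length L" "bef (swap_adj L k) x y"
  shows "bef L x y \<or> (x = L ! Suc k \<and> y = L ! k)"
proof -
  obtain i j where ij: "i < j" "j < length L" "swap_adj L k ! i = x" "swap_adj L k ! j = y"
    using assms(2) by (auto simp: bef_def swap_adj_def)
  define s where "s t = (if t = k then Suc k else if t = Suc k then k else t)" for t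
  have nth: "swap_adj L k ! t = L ! s t" if "t < length L" for t
    using that assms(1) by (auto simp: swap_adj_def s_def nth_list_update)
  have sl: "s t < length L" if "t < length L" for t using that assms(1) by (auto simp: s_def)
  show ?thesis
  proof (cases "s i < s j")
    case True
    then show ?thesis using ij nth sl unfolding bef_def
      by (metis order.strict_trans)
  next
    case False
    then have "i = k \<and> j = Suc k" using ij(1) by (auto simp: s_def split: if_splits)
    then show ?thesis using ij nth by (simp add: s_def)
  qed
qed

definition invs :: "'a list \<Rightarrow> 'a list \<Rightarrow> ('a \<times> 'a) set" where
  "invs L0 L = {(u, v). bef L0 u v \<and> bef L v u}"

lemma invs_finite: "finite (invs L0 L)"
proof -
  have "invs L0 L \<subseteq> set L0 \<times> set L0" using bef_set by (fastforce simp: invs_def)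
  then show ?thesis by (rule finite_subset) simp
qed

lemma invs_step:
  assumes "Suc k < length L"
  shows "card (invs L0 (swap_adj L k)) \<le> card (invs L0 L) + 1"
proof -
  have "invs L0 (swap_adj L k) \<subseteq> insert (L ! k, L ! Suc k) (invs L0 L)"
    using bef_swap[OF assms] by (auto simp: invs_def)
  then have "card (invs L0 (swap_adj L k)) \<le> card (insert (L ! k, L ! Suc k) (invs L0 L))"
    by (simp add: card_mono invs_finite)
  also have "\<dots> \<le> card (invs L0 L) + 1" by (simp add: card_insert_le_m1 invs_finite card_insert_if)
  finally show ?thesis .
qed

lemma invs_lower:
  assumes d0: "distinct L0" and d: "distinct L" and st: "set L = set L0"
    and k: "k < length L0" and b: "bef L (L0 ! k) (L0 ! 0)"
  shows "k \<le> card (invs L0 L)"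
proof -
  define y where "y = L0 ! 0"
  define x where "x = L0 ! k"
  define g where "g t = (if t = k then (y, x) else if bef L (L0 ! t) y then (y, L0 ! t) else (L0 ! t, x))" for t
  have mem: "g t \<in> invs L0 L" if t: "1 \<le> t" "t \<le> k" for t
  proof -
    have b0t1: "bef L0 y (L0 ! t)" if "t < k"
      using that t k unfolding bef_def y_def by (rule_tac exI[of _ 0], rule_tac exI[of _ t]; simp)
    have b0t2: "bef L0 (L0 ! t) x" if "t < k"
      using that t k unfolding bef_def x_def by (rule_tac exI[of _ t], rule_tac exI[of _ k]; simp)
    note b0t = b0t1 b0t2
    show ?thesis
    proof (cases "t = k")
      case True
      have "bef L0 y x" using t k True unfolding bef_def y_def x_def by (rule_tac exI[of _ 0], rule_tac exI[of _ k]; simp)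
      then show ?thesis using True b by (simp add: g_def invs_def x_def y_def)
    next
      case False
      then have tk: "t < k" using t by simp
      show ?thesis
      proof (cases "bef L (L0 ! t) y")
        case True then show ?thesis using False b0t[OF tk] by (simp add: g_def invs_def)
      next
        case nb: False
        have "L0 ! t \<noteq> y" using d0 t k unfolding y_def by (subst nth_eq_iff_index_eq) auto
        moreover have "L0 ! t \<in> set L" "y \<in> set L" using st t k y_def by (auto intro!: nth_mem)
        ultimately have "bef L y (L0 ! t)" using bef_total nb by metis
        then have "bef L x (L0 ! t)" using bef_trans[OF d] b x_def y_def by metis
        then show ?thesis using False nb b0t[OF tk] by (simp add: g_def invs_def)
      qed
    qed
  qed
  have inj: "inj_on g {1..k}"
  proof (rule inj_onI)
    fix s t assume s: "s \<in> {1..k}" and t: "t \<in> {1..k}" and eq: "g s = g t"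
    have ne: "L0 ! u \<noteq> L0 ! v" if "u \<noteq> v" "u < length L0" "v < length L0" for u v
      using that d0 by (simp add: nth_eq_iff_index_eq)
    show "s = t"
    proof (rule ccontr)
      assume st': "s \<noteq> t"
      have sl: "s < length L0" "t < length L0" "0 < length L0" using s t k by auto
      show False using eq st' s t ne[OF st' sl(1,2)] ne[of 0 s] ne[of 0 t] ne[of s k] ne[of t k] sl k
        unfolding g_def x_def y_def by (auto split: if_splits)
    qed
  qed
  have "card (g ` {1..k}) = k" using card_image[OF inj] by simp
  moreover have "g ` {1..k} \<subseteq> invs L0 L" using mem by auto
  ultimately show ?thesis using card_mono[OF invs_finite] by metis
qed

definition cnt :: "'a \<Rightarrow> ('a \<times> nat) list \<Rightarrow> nat" where
  "cnt a S = length (filter (\<lambda>s. fst s = a) S)"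

lemma cnt_sum: "finite A \<Longrightarrow> (\<Sum>a\<in>A. cnt a S) = length (filter (\<lambda>s. fst s \<in> A) S)"
proof (induction S)
  case Nil then show ?case by (simp add: cnt_def)
next
  case (Cons s S)
  have "(\<Sum>a\<in>A. cnt a (s # S)) = (\<Sum>a\<in>A. (if fst s = a then 1 else 0) + cnt a S)"
    by (rule sum.cong) (auto simp: cnt_def)
  also have "\<dots> = (\<Sum>a\<in>A. (if fst s = a then 1 else 0)) + (\<Sum>a\<in>A. cnt a S)"
    by (simp add: sum.distrib)
  also have "\<dots> = (if fst s \<in> A then 1 else 0) + length (filter (\<lambda>s. fst s \<in> A) S)"
    using Cons by (simp add: sum.delta)
  finally show ?case by simp
qed

lemma cnt_sum_le: "finite A \<Longrightarrow> (\<Sum>a\<in>A. cnt a S) \<le> length S"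
  using cnt_sum length_filter_le by metis

lemma Q_len: "length (apply_swaps P S a) = length (P a)"
proof (induction S rule: rev_induct)
  case Nil then show ?case by (simp add: apply_swaps_def)
next
  case (snoc s S) then show ?case
    by (cases s) (auto simp add: apply_swaps_def apply_swap_def swap_adj_def)
qed

lemma Q_props:
  assumes "valid_swaps U W P S" "\<forall>a\<in>U\<union>W. distinct (P a)"
  shows "\<forall>a\<in>U\<union>W. distinct (apply_swaps P S a) \<and> set (apply_swaps P S a) = set (P a)
     \<and> card (invs (P a) (apply_swaps P S a)) \<le> cnt a S"
  using assms(1)
proof (induction S rule: rev_induct)
  case Nil
  have "invs L L = {}" if "distinct L" for L :: "'a list" using bef_asym[OF that] by (auto simp: invs_def)
  then show ?case using assms(2) by (simp add: apply_swaps_def cnt_def)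
next
  case (snoc s S)
  obtain b k where s: "s = (b, k)" by (cases s)
  have v: "valid_swaps U W P S" using snoc.prems by (simp add: valid_swaps_def)
  have vk: "b \<in> U \<union> W" "Suc k < length (P b)" using snoc.prems s by (auto simp: valid_swaps_def)
  define Q where "Q = apply_swaps P S"
  have QS: "apply_swaps P (S @ [(b,k)]) = Q(b := swap_adj (Q b) k)"
    by (simp add: apply_swaps_def apply_swap_def Q_def)
  have IH: "\<forall>a\<in>U\<union>W. distinct (Q a) \<and> set (Q a) = set (P a) \<and> card (invs (P a) (Q a)) \<le> cnt a S"
    using snoc.IH[OF v] by (simp add: Q_def)
  have lb: "Suc k < length (Q b)" using vk Q_len unfolding Q_def by metis
  show ?case
  proof
    fix a assume a: "a \<in> U \<union> W"
    show "distinct (apply_swaps P (S @ [s]) a) \<and> set (apply_swaps P (S @ [s]) a) = set (P a)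
     \<and> card (invs (P a) (apply_swaps P (S @ [s]) a)) \<le> cnt a (S @ [s])"
    proof (cases "a = b")
      case True
      have "card (invs (P a) (swap_adj (Q b) k)) \<le> card (invs (P a) (Q b)) + 1"
        using invs_step[OF lb] .
      moreover have "card (invs (P b) (Q b)) \<le> cnt b S" using IH vk by auto
      moreover have "cnt b (S @ [s]) = cnt b S + 1" by (simp add: cnt_def s)
      moreover have "apply_swaps P (S @ [s]) a = swap_adj (Q b) k" using QS True s by simp
      moreover have "distinct (Q b)" "set (Q b) = set (P b)" using IH vk by auto
      ultimately show ?thesis using True lb by (simp add: swap_adj_def)
    next
      case False
      then show ?thesis using IH a unfolding s by (simp add: QS cnt_def)
    qed
  qed
qed

lemma sm_sym: "sm_instance U W P \<Longrightarrow> sm_instance W U P"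
  unfolding sm_instance_def by auto

lemma valid_sym: "valid_swaps U W P S \<Longrightarrow> valid_swaps W U P S"
  unfolding valid_swaps_def by auto

lemma stable_sym: "stable U W Q M \<Longrightarrow> stable W U Q (M\<inverse>)"
  unfolding stable_def matching_def blocks_def by blast

lemma dummy_nth:
  assumes "take r L = map (\<lambda>j. d ((i + j) mod r)) [0..<r]"
  shows "r \<le> length L" "\<And>j. j < r \<Longrightarrow> L ! j = d ((i + j) mod r)"
proof -
  have "length (take r L) = r" using assms by simp
  then show "r \<le> length L" by simp
  fix j assume j: "j < r"
  have "L ! j = take r L ! j" using j by simp
  also have "\<dots> = d ((i + j) mod r)" using assms j by simp
  finally show "L ! j = d ((i + j) mod r)" .
qed

lemma men_side:
  fixes U W :: "'a set" and P :: "'a prefs" and r :: nat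
    and md wd :: "nat \<Rightarrow> 'a" and S :: "('a \<times> nat) list" and M :: "('a \<times> 'a) set"
  assumes inst: "sm_instance U W P"
    and md: "inj_on md {..<r}" "md ` {..<r} \<subseteq> U"
    and wd: "inj_on wd {..<r}" "wd ` {..<r} \<subseteq> W"
    and pm: "\<forall>i<r. take r (P (md i)) = map (\<lambda>j. wd ((i + j) mod r)) [0..<r]"
    and pw: "\<forall>i<r. take r (P (wd i)) = map (\<lambda>j. md ((i + j) mod r)) [0..<r]"
    and S: "length S \<le> r - 1" "valid_swaps U W P S"
    and M: "stable U W (apply_swaps P S) M"
  shows "\<forall>b<r. \<forall>p. (md b, p) \<in> M \<longrightarrow> \<not> prefers (apply_swaps P S) (md b) p (wd b)"
proof (rule ccontr)
  define Q where "Q = apply_swaps P S"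
  define B where "B = {b. b < r \<and> (\<exists>p. (md b, p) \<in> M \<and> prefers Q (md b) p (wd b))}"
  assume "\<not> ?thesis"
  then have Bne: "B \<noteq> {}" by (auto simp: B_def Q_def)
  have finB: "finite B" by (simp add: B_def)
  have dU: "\<forall>a\<in>U. distinct (P a) \<and> set (P a) = W" and dW: "\<forall>a\<in>W. distinct (P a) \<and> set (P a) = U"
    and disj: "U \<inter> W = {}"
    using inst by (auto simp: sm_instance_def)
  have QP: "\<forall>a\<in>U\<union>W. distinct (Q a) \<and> set (Q a) = set (P a) \<and> card (invs (P a) (Q a)) \<le> cnt a S"
    unfolding Q_def by (rule Q_props[OF S(2)]) (use dU dW in auto)
  have Mm: "matching U W M" and nb: "\<And>m w. m \<in> U \<Longrightarrow> w \<in> W \<Longrightarrow> \<not> blocks Q M m w"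
    using M by (auto simp: stable_def Q_def)
  have MUW: "M \<subseteq> U \<times> W" and Mf: "\<And>m w w'. (m, w) \<in> M \<Longrightarrow> (m, w') \<in> M \<Longrightarrow> w = w'"
    and Mi: "\<And>m m' w. (m, w) \<in> M \<Longrightarrow> (m', w) \<in> M \<Longrightarrow> m = m'"
    using Mm by (auto simp: matching_def)
  have mdU: "md i \<in> U" and wdW: "wd i \<in> W" if "i < r" for i using md wd that by auto
  have mlen: "r \<le> length (P (md i))" and mnth: "\<And>j. j < r \<Longrightarrow> P (md i) ! j = wd ((i + j) mod r)"
    if "i < r" for i using dummy_nth[of r "P (md i)" wd i] pm that by auto
  have wlen: "r \<le> length (P (wd i))" and wnth: "\<And>j. j < r \<Longrightarrow> P (wd i) ! j = md ((i + j) mod r)"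
    if "i < r" for i using dummy_nth[of r "P (wd i)" md i] pw that by auto
  have cntS: "cnt a S \<le> length S" for a unfolding cnt_def by simp
  have two: "cnt a S + cnt a' S \<le> length S" if "a \<noteq> a'" for a a'
    using cnt_sum_le[of "{a, a'}" S] that by simp
  define p where "p b = (SOME p. (md b, p) \<in> M \<and> prefers Q (md b) p (wd b))" for b
  define kk where "kk b = (SOME k. k < length (P (md b)) \<and> P (md b) ! k = p b)" for b
  define f where "f b = (b + kk b) mod r" for b
  have key: "0 < kk b \<and> kk b \<le> cnt (md b) S \<and> kk b < r \<and> (md b, wd (f b)) \<in> M \<and> f b \<in> B"
    if bB: "b \<in> B" for b
  proof -
    have br: "b < r" using bB by (simp add: B_def)
    have pb: "(md b, p b) \<in> M" "prefers Q (md b) (p b) (wd b)"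
      using bB unfolding B_def p_def by (auto intro: someI2_ex)
    have pW: "p b \<in> W" using pb MUW by auto
    have Pm: "distinct (P (md b))" "set (P (md b)) = W" using dU mdU[OF br] by auto
    have Qm: "distinct (Q (md b))" "set (Q (md b)) = W" "card (invs (P (md b)) (Q (md b))) \<le> cnt (md b) S"
      using QP Pm mdU[OF br] by auto
    have "\<exists>k. k < length (P (md b)) \<and> P (md b) ! k = p b" using pW Pm by (metis in_set_conv_nth)
    then have kb: "kk b < length (P (md b))" "P (md b) ! kk b = p b"
      unfolding kk_def by (auto intro: someI2_ex)
    have P0: "P (md b) ! 0 = wd b" using mnth[OF br, of 0] br by simp
    have "kk b \<le> card (invs (P (md b)) (Q (md b)))"
      using invs_lower[OF Pm(1) Qm(1)] Qm(2) Pm(2) kb pb(2) P0 by (simp add: prefers_bef)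
    then have kc: "kk b \<le> cnt (md b) S" using Qm(3) by linarith
    then have kr: "kk b < r" using cntS[of "md b"] S(1) br by linarith
    have k0: "0 < kk b"
    proof (rule ccontr)
      assume "\<not> 0 < kk b"
      then have "p b = wd b" using kb P0 by simp
      then show False using pb(2) bef_irrefl[OF Qm(1)] by (simp add: prefers_bef)
    qed
    have pf: "p b = wd (f b)" using kb mnth[OF br kr] by (simp add: f_def)
    have Mf': "(md b, wd (f b)) \<in> M" using pb pf by simp
    define a where "a = f b"
    have ar: "a < r" using br by (simp add: a_def f_def)
    have ab: "a \<noteq> b"
    proof
      assume "a = b"
      then have "(b + kk b) mod r = b" by (simp add: a_def f_def)
      moreover have "(b + kk b) mod r = (if b + kk b < r then b + kk b else b + kk b - r)"
        using br kr by (simp add: mod_if le_mod_geq)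
      ultimately show False using br kr k0 by (auto split: if_splits)
    qed
    have "a \<in> B"
    proof (rule ccontr)
      assume aB: "a \<notin> B"
      then have nap: "\<And>q. (md a, q) \<in> M \<Longrightarrow> \<not> prefers Q (md a) q (wd a)" using ar by (auto simp: B_def)
      have Mfa: "(md b, wd a) \<in> M" using Mf' unfolding a_def .
      have mab: "md a \<noteq> md b"
      proof
        assume "md a = md b"
        then have "a = b" using inj_onD[OF md(1)] ar br by simp
        then show False using ab by simp
      qed
      have Qma: "distinct (Q (md a))" "set (Q (md a)) = W" using QP dU mdU[OF ar] by auto
      have c1: "(\<forall>w'. (md a, w') \<notin> M) \<or> (\<exists>w'. (md a, w') \<in> M \<and> prefers Q (md a) (wd a) w')"
      proof (cases "\<exists>w'. (md a, w') \<in> M")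
        case True
        then obtain w' where w': "(md a, w') \<in> M" by blast
        have "w' \<noteq> wd a"
        proof
          assume "w' = wd a"
          then have "md a = md b" using w' Mfa Mi by simp
          then show False using mab by simp
        qed
        moreover have "w' \<in> W" using w' MUW by auto
        moreover have "wd a \<in> set (Q (md a))" using Qma wdW[OF ar] by simp
        moreover have "\<not> bef (Q (md a)) w' (wd a)" using nap[OF w'] by (simp add: prefers_bef)
        ultimately have "prefers Q (md a) (wd a) w'" using bef_total[of "wd a" "Q (md a)" w'] Qma
          by (auto simp: prefers_bef)
        then show ?thesis using w' by blast
      qed auto
      have "\<not> blocks Q M (md a) (wd a)" using nb[OF mdU[OF ar] wdW[OF ar]] .
      then have "\<not> ((\<forall>m'. (m', wd a) \<notin> M) \<or> (\<exists>m'. (m', wd a) \<in> M \<and> prefers Q (wd a) (md a) m'))"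
        using c1 unfolding blocks_def by blast
      then have "\<not> prefers Q (wd a) (md a) (md b)" using Mfa by blast
      moreover have Qwa: "distinct (Q (wd a))" "set (Q (wd a)) = U"
        "card (invs (P (wd a)) (Q (wd a))) \<le> cnt (wd a) S" using QP dW wdW[OF ar] by auto
      moreover have "md a \<in> set (Q (wd a))" "md b \<in> set (Q (wd a))" using Qwa mdU ar br by auto
      ultimately have bw: "bef (Q (wd a)) (md b) (md a)"
        using bef_total[of "md a" "Q (wd a)" "md b"] mab by (auto simp: prefers_bef)
      have Pw: "distinct (P (wd a))" "set (P (wd a)) = U" using dW wdW[OF ar] by auto
      have Pw0: "P (wd a) ! 0 = md a" using wnth[OF ar, of 0] ar by simp
      have "(a + (r - kk b)) mod r = b"
      proof -
        have "(a + (r - kk b)) mod r = (b + kk b + (r - kk b)) mod r"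
          unfolding a_def f_def by (simp add: mod_add_left_eq)
        also have "\<dots> = (b + r) mod r" using kr by (simp add: add.assoc)
        also have "\<dots> = b" using br by simp
        finally show ?thesis .
      qed
      moreover have "r - kk b < r" using k0 kr by simp
      ultimately have Pwk: "P (wd a) ! (r - kk b) = md b" using wnth[OF ar, of "r - kk b"] by simp
      have rl: "r - kk b < length (P (wd a))" using wlen[OF ar] k0 kr by simp
      have st: "set (Q (wd a)) = set (P (wd a))" using Qwa(2) Pw(2) by simp
      have bw': "bef (Q (wd a)) (P (wd a) ! (r - kk b)) (P (wd a) ! 0)" using bw Pw0 Pwk by simp
      have "r - kk b \<le> card (invs (P (wd a)) (Q (wd a)))"
        by (rule invs_lower[OF Pw(1) Qwa(1) st rl bw'])
      then have "r - kk b \<le> cnt (wd a) S" using Qwa(3) by linarith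
      moreover have "md b \<noteq> wd a" using disj mdU[OF br] wdW[OF ar] by auto
      then have "cnt (md b) S + cnt (wd a) S \<le> length S" by (rule two)
      ultimately show False using kc S(1) kr by linarith
    qed
    then show ?thesis using k0 kc kr Mf' a_def by simp
  qed
  have fB: "f ` B \<subseteq> B" using key by auto
  have finj: "inj_on f B"
  proof (rule inj_onI)
    fix b b' assume "b \<in> B" "b' \<in> B" "f b = f b'"
    moreover have "(md b, wd (f b)) \<in> M" "(md b', wd (f b')) \<in> M" using key \<open>b \<in> B\<close> \<open>b' \<in> B\<close> by blast+
    ultimately have "md b = md b'" using Mi by metis
    then show "b = b'" using md(1) \<open>b \<in> B\<close> \<open>b' \<in> B\<close> by (auto simp: B_def dest: inj_onD)
  qed
  have fBB: "f ` B = B" using endo_inj_surj[OF finB fB finj] .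
  have sf: "(\<Sum>b\<in>B. f b) = (\<Sum>b\<in>B. b)"
    using sum.reindex[OF finj, of id] fBB by simp
  have "(\<Sum>b\<in>B. b + kk b) = (\<Sum>b\<in>B. f b + r * ((b + kk b) div r))"
    by (rule sum.cong) (simp_all add: f_def mod_mult_div_eq)
  then have "(\<Sum>b\<in>B. b) + (\<Sum>b\<in>B. kk b) = (\<Sum>b\<in>B. f b) + r * (\<Sum>b\<in>B. (b + kk b) div r)"
    by (simp add: sum.distrib sum_distrib_left)
  then have sk: "(\<Sum>b\<in>B. kk b) = r * (\<Sum>b\<in>B. (b + kk b) div r)" using sf by simp
  have "0 < (\<Sum>b\<in>B. kk b)" using key Bne finB by (simp add: sum_pos)
  then have "(\<Sum>b\<in>B. (b + kk b) div r) \<noteq> 0" using sk by auto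
  then have ge: "r \<le> (\<Sum>b\<in>B. kk b)" unfolding sk by simp
  have "(\<Sum>b\<in>B. kk b) \<le> (\<Sum>b\<in>B. cnt (md b) S)" using key by (simp add: sum_mono)
  also have "\<dots> = (\<Sum>a\<in>md ` B. cnt a S)"
    using sum.reindex[of md B "\<lambda>a. cnt a S"] md(1) by (simp add: B_def inj_on_def)
  also have "\<dots> \<le> length S" using finB by (simp add: cnt_sum_le)
  finally have "r \<le> length S" using ge by linarith
  moreover have "0 < r" using Bne by (auto simp: B_def)
  ultimately show False using S(1) by linarith
qed


theorem mainTheorem4:
  fixes U W :: "'a set" and P :: "'a prefs" and r :: nat
    and md wd :: "nat \<Rightarrow> 'a" and S :: "('a \<times> nat) list" and M :: "('a \<times> 'a) set"
  assumes inst: "sm_instance U W P"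
    and md: "inj_on md {..<r}" "md ` {..<r} \<subseteq> U"
    and wd: "inj_on wd {..<r}" "wd ` {..<r} \<subseteq> W"
    and pm: "\<forall>i<r. take r (P (md i)) = map (\<lambda>j. wd ((i + j) mod r)) [0..<r]"
    and pw: "\<forall>i<r. take r (P (wd i)) = map (\<lambda>j. md ((i + j) mod r)) [0..<r]"
    and S: "length S \<le> r - 1" "valid_swaps U W P S"
    and M: "stable U W (apply_swaps P S) M"
  shows "\<forall>i<r. (md i, wd i) \<in> M"
proof (intro allI impI)
  fix i assume ir: "i < r"
  define Q where "Q = apply_swaps P S"
  have A: "\<forall>b<r. \<forall>p. (md b, p) \<in> M \<longrightarrow> \<not> prefers Q (md b) p (wd b)"
    using men_side[OF inst md wd pm pw S M] by (simp add: Q_def)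
  have B: "\<forall>b<r. \<forall>p. (wd b, p) \<in> M\<inverse> \<longrightarrow> \<not> prefers Q (wd b) p (md b)"
    using men_side[OF sm_sym[OF inst] wd md pw pm S(1) valid_sym[OF S(2)] stable_sym[OF M]]
    by (simp add: Q_def)
  have dU: "\<forall>a\<in>U. distinct (P a) \<and> set (P a) = W" and dW: "\<forall>a\<in>W. distinct (P a) \<and> set (P a) = U"
    using inst by (auto simp: sm_instance_def)
  have QP: "\<forall>a\<in>U\<union>W. distinct (Q a) \<and> set (Q a) = set (P a) \<and> card (invs (P a) (Q a)) \<le> cnt a S"
    unfolding Q_def by (rule Q_props[OF S(2)]) (use dU dW in auto)
  have mU: "md i \<in> U" and wW: "wd i \<in> W" using md wd ir by auto
  have Qm: "distinct (Q (md i))" "set (Q (md i)) = W" using QP dU mU by auto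
  have Qw: "distinct (Q (wd i))" "set (Q (wd i)) = U" using QP dW wW by auto
  have Mm: "matching U W M" and nb: "\<not> blocks Q M (md i) (wd i)"
    using M mU wW by (auto simp: stable_def Q_def)
  have MUW: "M \<subseteq> U \<times> W" using Mm by (simp add: matching_def)
  show "(md i, wd i) \<in> M"
  proof (rule ccontr)
    assume nin: "(md i, wd i) \<notin> M"
    have c1: "(\<forall>w'. (md i, w') \<notin> M) \<or> (\<exists>w'. (md i, w') \<in> M \<and> prefers Q (md i) (wd i) w')"
    proof (cases "\<exists>w'. (md i, w') \<in> M")
      case True
      then obtain w' where w': "(md i, w') \<in> M" by blast
      have "w' \<noteq> wd i" using w' nin by auto
      moreover have "w' \<in> set (Q (md i))" using w' MUW Qm by auto
      moreover have "wd i \<in> set (Q (md i))" using Qm wW by simp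
      moreover have "\<not> bef (Q (md i)) w' (wd i)" using A ir w' by (simp add: prefers_bef)
      ultimately have "prefers Q (md i) (wd i) w'" using bef_total[of "wd i" "Q (md i)" w']
        by (auto simp: prefers_bef)
      then show ?thesis using w' by blast
    qed auto
    have c2: "(\<forall>m'. (m', wd i) \<notin> M) \<or> (\<exists>m'. (m', wd i) \<in> M \<and> prefers Q (wd i) (md i) m')"
    proof (cases "\<exists>m'. (m', wd i) \<in> M")
      case True
      then obtain m' where m': "(m', wd i) \<in> M" by blast
      have "m' \<noteq> md i" using m' nin by auto
      moreover have "m' \<in> set (Q (wd i))" using m' MUW Qw by auto
      moreover have "md i \<in> set (Q (wd i))" using Qw mU by simp
      moreover have "\<not> bef (Q (wd i)) m' (md i)" using B ir m' by (simp add: prefers_bef)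
      ultimately have "prefers Q (wd i) (md i) m'" using bef_total[of "md i" "Q (wd i)" m']
        by (auto simp: prefers_bef)
      then show ?thesis using m' by blast
    qed auto
    show False using nb c1 c2 unfolding blocks_def by blast
  qed
qed

end
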